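(* The graph $H_7$ has rank cardinality vector $(2,2,2,1)$, and every graph whose rank cardinality vector is $(2,2,2,1)$ is isomorphic to $H_7$.
   Context: All graphs are finite, nonempty, and reflexive (every vertex has a loop). $N[v]$ is the closed neighborhood of $v$ (including $v$). For distinct $v,w$, $w$ strictly corners $v$ if $N[v]\subsetneq N[w]$; $v$ is then a strict corner. Corner ranking: set $G^{(1)}=G$, $k=1$. If $G^{(k)}$ is a clique, give all its vertices rank $k$ and stop. Else if $G^{(k)}$ has no strict corners, give all its vertices rank $\infty$ and stop. Else give every strict corner of $G^{(k)}$ rank $k$, delete them to get $G^{(k+1)}$ (induced subgraph), increase $k$ and repeat. The corner rank is the largest rank of a vertex; $X_k$ is the set of rank-$k$ vertices. The rank cardinality vector of a graph of finite corner rank $\alpha$ is $(x_\alpha,\dots,x_1)$ with $x_k=|X_k|$. $H_7$ is the graph on vertices $a_1,a_2,b_1,b_2,c_1,c_2,d$ with edges $a_1a_2,a_1b_1,a_1b_2,a_2b_1,a_2b_2,a_2c_1,a_1c_2,b_1c_1,b_1c_2,b_1d,b_2c_1,b_2c_2,c_1d,c_2d$. *)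

theory Defs
  imports Main
begin

definition rgraph :: "'a set \<Rightarrow> ('a \<Rightarrow> 'a \<Rightarrow> bool) \<Rightarrow> bool" where
  "rgraph V E \<longleftrightarrow> finite V \<and> V \<noteq> {} \<and> (\<forall>x\<in>V. E x x)
     \<and> (\<forall>x y. E x y \<longrightarrow> x \<in> V \<and> y \<in> V \<and> E y x)"

definition cnbhd :: "'a set \<Rightarrow> ('a \<Rightarrow> 'a \<Rightarrow> bool) \<Rightarrow> 'a \<Rightarrow> 'a set" where
  "cnbhd W E v = {w \<in> W. E v w}"

definition strict_corner :: "'a set \<Rightarrow> ('a \<Rightarrow> 'a \<Rightarrow> bool) \<Rightarrow> 'a \<Rightarrow> bool" where
  "strict_corner W E v \<longleftrightarrow> v \<in> W \<and> (\<exists>w\<in>W. w \<noteq> v \<and> cnbhd W E v \<subset> cnbhd W E w)"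

definition corners :: "'a set \<Rightarrow> ('a \<Rightarrow> 'a \<Rightarrow> bool) \<Rightarrow> 'a set" where
  "corners W E = {v \<in> W. strict_corner W E v}"

definition is_clique :: "'a set \<Rightarrow> ('a \<Rightarrow> 'a \<Rightarrow> bool) \<Rightarrow> bool" where
  "is_clique W E \<longleftrightarrow> (\<forall>x\<in>W. \<forall>y\<in>W. E x y)"

text \<open>stage V E k is the vertex set of G^(k+1) (0-indexed): repeatedly delete all strict corners.\<close>
primrec stage :: "'a set \<Rightarrow> ('a \<Rightarrow> 'a \<Rightarrow> bool) \<Rightarrow> nat \<Rightarrow> 'a set" where
  "stage V E 0 = V"
| "stage V E (Suc k) = stage V E k - corners (stage V E k) E"

text \<open>The ranking terminates with finite ranks iff some G^(k) is a clique
(if G^(k) has no strict corners and is not a clique, the stages become constant).\<close>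
definition finite_corner_rank :: "'a set \<Rightarrow> ('a \<Rightarrow> 'a \<Rightarrow> bool) \<Rightarrow> bool" where
  "finite_corner_rank V E \<longleftrightarrow> (\<exists>k. is_clique (stage V E k) E)"

text \<open>Corner rank alpha: the (1-indexed) first k with G^(k) a clique.\<close>
definition corner_rank :: "'a set \<Rightarrow> ('a \<Rightarrow> 'a \<Rightarrow> bool) \<Rightarrow> nat" where
  "corner_rank V E = Suc (LEAST k. is_clique (stage V E k) E)"

definition rank_set :: "'a set \<Rightarrow> ('a \<Rightarrow> 'a \<Rightarrow> bool) \<Rightarrow> nat \<Rightarrow> 'a set" where
  "rank_set V E k =
     (if 1 \<le> k \<and> k < corner_rank V E then corners (stage V E (k - 1)) E
      else if k = corner_rank V E then stage V E (k - 1) else {})"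

definition rank_card_vector :: "'a set \<Rightarrow> ('a \<Rightarrow> 'a \<Rightarrow> bool) \<Rightarrow> nat list" where
  "rank_card_vector V E = rev (map (\<lambda>k. card (rank_set V E k)) [1..<Suc (corner_rank V E)])"

definition graph_iso :: "'a set \<Rightarrow> ('a \<Rightarrow> 'a \<Rightarrow> bool) \<Rightarrow> 'b set \<Rightarrow> ('b \<Rightarrow> 'b \<Rightarrow> bool) \<Rightarrow> bool" where
  "graph_iso V E V' E' \<longleftrightarrow>
     (\<exists>f. bij_betw f V V' \<and> (\<forall>x\<in>V. \<forall>y\<in>V. E x y \<longleftrightarrow> E' (f x) (f y)))"

datatype h7v = a1 | a2 | b1 | b2 | c1 | c2 | d

definition H7_edges :: "(h7v \<times> h7v) list" where
  "H7_edges = [(a1,a2),(a1,b1),(a1,b2),(a2,b1),(a2,b2),(a2,c1),(a1,c2),(b1,c1),(b1,c2),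
               (b1,d),(b2,c1),(b2,c2),(c1,d),(c2,d)]"

definition H7V :: "h7v set" where
  "H7V = UNIV"

definition H7E :: "h7v \<Rightarrow> h7v \<Rightarrow> bool" where
  "H7E x y \<longleftrightarrow> x = y \<or> (x, y) \<in> set H7_edges \<or> (y, x) \<in> set H7_edges"

end

theory Submission
  imports Defs
begin

lemma sc_iff: "strict_corner W E v \<longleftrightarrow> v \<in> W \<and> (\<exists>w\<in>W. w \<noteq> v \<and> (\<forall>j\<in>W. E v j \<longrightarrow> E w j) \<and> (\<exists>j\<in>W. E w j \<and> \<not> E v j))"
  unfolding strict_corner_def cnbhd_def by auto

lemma st2:
  assumes dist: "distinct [p,q,x,y]"
  and r: "E p p" "E q q" "E x x" "E y y"
  and s: "E q p = E p q" "E x p = E p x" "E y p = E p y" "E x q = E q x" "E y q = E q y" "E y x = E x y"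
  and pq: "E p q"
  and c2: "\<forall>w\<in>{p,q,x,y}. strict_corner {p,q,x,y} E w \<longleftrightarrow> w\<in>{x,y}"
  shows "\<not> E x y \<and> ((E p x \<and> E q y) \<or> (E q x \<and> E p y))"
  using c2 dist pq unfolding sc_iff by (simp add: r s) (cases "E x y"; cases "E p x"; cases "E q y"; cases "E q x"; cases "E p y"; simp add: r s)


lemma st1:
  assumes dist: "distinct [p,q,x,y,u,v]"
  and r: "E p p" "E q q" "E x x" "E y y" "E u u" "E v v"
  and s: "E q p = E p q" "E x p = E p x" "E y p = E p y" "E u p = E p u" "E v p = E p v" "E x q = E q x" "E y q = E q y" "E u q = E q u" "E v q = E q v" "E y x = E x y" "E u x = E x u" "E v x = E x v" "E u y = E y u" "E v y = E y v" "E v u = E u v"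
  and pq: "E p q"
  and w2: "\<not> E x y \<and> ((E p x \<and> E q y) \<or> (E q x \<and> E p y))"
  and c2: "\<forall>w\<in>{p,q,x,y}. strict_corner {p,q,x,y} E w \<longleftrightarrow> w\<in>{x,y}"
  and c1: "\<forall>w\<in>{p,q,x,y,u,v}. strict_corner {p,q,x,y,u,v} E w \<longleftrightarrow> w\<in>{u,v}"
  shows "(E p q \<and> \<not> E p x \<and> E p y \<and> \<not> E p u \<and> \<not> E p v \<and> E q x \<and> \<not> E q y \<and> \<not> E q u \<and> \<not> E q v \<and> \<not> E x y \<and> \<not> E x u \<and> E x v \<and> E y u \<and> \<not> E y v \<and> \<not> E u v) \<or>
    (E p q \<and> \<not> E p x \<and> E p y \<and> \<not> E p u \<and> \<not> E p v \<and> E q x \<and> \<not> E q y \<and> \<not> E q u \<and> \<not> E q v \<and> \<not> E x y \<and> E x u \<and> \<not> E x v \<and> \<not> E y u \<and> E y v \<and> \<not> E u v) \<or>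
    (E p q \<and> E p x \<and> \<not> E p y \<and> \<not> E p u \<and> \<not> E p v \<and> \<not> E q x \<and> E q y \<and> \<not> E q u \<and> \<not> E q v \<and> \<not> E x y \<and> \<not> E x u \<and> E x v \<and> E y u \<and> \<not> E y v \<and> \<not> E u v) \<or>
    (E p q \<and> E p x \<and> \<not> E p y \<and> \<not> E p u \<and> \<not> E p v \<and> \<not> E q x \<and> E q y \<and> \<not> E q u \<and> \<not> E q v \<and> \<not> E x y \<and> E x u \<and> \<not> E x v \<and> \<not> E y u \<and> E y v \<and> \<not> E u v) \<or>
    (E p q \<and> E p x \<and> E p y \<and> \<not> E p u \<and> \<not> E p v \<and> E q x \<and> E q y \<and> \<not> E q u \<and> \<not> E q v \<and> \<not> E x y \<and> \<not> E x u \<and> E x v \<and> E y u \<and> \<not> E y v \<and> \<not> E u v) \<or>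
    (E p q \<and> E p x \<and> E p y \<and> \<not> E p u \<and> \<not> E p v \<and> E q x \<and> E q y \<and> \<not> E q u \<and> \<not> E q v \<and> \<not> E x y \<and> E x u \<and> \<not> E x v \<and> \<not> E y u \<and> E y v \<and> \<not> E u v) \<or>
    (E p q \<and> E p x \<and> E p y \<and> \<not> E p u \<and> E p v \<and> E q x \<and> E q y \<and> E q u \<and> \<not> E q v \<and> \<not> E x y \<and> E x u \<and> E x v \<and> E y u \<and> E y v \<and> \<not> E u v) \<or>
    (E p q \<and> E p x \<and> E p y \<and> E p u \<and> \<not> E p v \<and> E q x \<and> E q y \<and> \<not> E q u \<and> E q v \<and> \<not> E x y \<and> E x u \<and> E x v \<and> E y u \<and> E y v \<and> \<not> E u v)"
  using c1 c2 w2 dist pq unfolding sc_iff by (simp add: r s) (cases "E p x"; (simp add: r s)?; cases "E q x"; (simp add: r s)?; cases "E p y"; (simp add: r s)?; cases "E q y"; (simp add: r s)?; cases "E p u"; (simp add: r s)?; cases "E p v"; (simp add: r s)?; cases "E q u"; (simp add: r s)?; cases "E q v"; (simp add: r s)?; cases "E x u"; (simp add: r s)?; cases "E x v"; (simp add: r s)?; cases "E y u"; (simp add: r s)?; cases "E y v"; (simp add: r s)?; cases "E u v"; (simp add: r s)?)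


lemma st0:
  assumes dist: "distinct [p,q,x,y,u,v,z]"
  and r: "E p p" "E q q" "E x x" "E y y" "E u u" "E v v" "E z z"
  and s: "E q p = E p q" "E x p = E p x" "E y p = E p y" "E u p = E p u" "E v p = E p v" "E z p = E p z" "E x q = E q x" "E y q = E q y" "E u q = E q u" "E v q = E q v" "E z q = E q z" "E y x = E x y" "E u x = E x u" "E v x = E x v" "E z x = E x z" "E u y = E y u" "E v y = E y v" "E z y = E y z" "E v u = E u v" "E z u = E u z" "E z v = E v z"
  and w1: "(E p q \<and> \<not> E p x \<and> E p y \<and> \<not> E p u \<and> \<not> E p v \<and> E q x \<and> \<not> E q y \<and> \<not> E q u \<and> \<not> E q v \<and> \<not> E x y \<and> \<not> E x u \<and> E x v \<and> E y u \<and> \<not> E y v \<and> \<not> E u v) \<or>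
    (E p q \<and> \<not> E p x \<and> E p y \<and> \<not> E p u \<and> \<not> E p v \<and> E q x \<and> \<not> E q y \<and> \<not> E q u \<and> \<not> E q v \<and> \<not> E x y \<and> E x u \<and> \<not> E x v \<and> \<not> E y u \<and> E y v \<and> \<not> E u v) \<or>
    (E p q \<and> E p x \<and> \<not> E p y \<and> \<not> E p u \<and> \<not> E p v \<and> \<not> E q x \<and> E q y \<and> \<not> E q u \<and> \<not> E q v \<and> \<not> E x y \<and> \<not> E x u \<and> E x v \<and> E y u \<and> \<not> E y v \<and> \<not> E u v) \<or>
    (E p q \<and> E p x \<and> \<not> E p y \<and> \<not> E p u \<and> \<not> E p v \<and> \<not> E q x \<and> E q y \<and> \<not> E q u \<and> \<not> E q v \<and> \<not> E x y \<and> E x u \<and> \<not> E x v \<and> \<not> E y u \<and> E y v \<and> \<not> E u v) \<or>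
    (E p q \<and> E p x \<and> E p y \<and> \<not> E p u \<and> \<not> E p v \<and> E q x \<and> E q y \<and> \<not> E q u \<and> \<not> E q v \<and> \<not> E x y \<and> \<not> E x u \<and> E x v \<and> E y u \<and> \<not> E y v \<and> \<not> E u v) \<or>
    (E p q \<and> E p x \<and> E p y \<and> \<not> E p u \<and> \<not> E p v \<and> E q x \<and> E q y \<and> \<not> E q u \<and> \<not> E q v \<and> \<not> E x y \<and> E x u \<and> \<not> E x v \<and> \<not> E y u \<and> E y v \<and> \<not> E u v) \<or>
    (E p q \<and> E p x \<and> E p y \<and> \<not> E p u \<and> E p v \<and> E q x \<and> E q y \<and> E q u \<and> \<not> E q v \<and> \<not> E x y \<and> E x u \<and> E x v \<and> E y u \<and> E y v \<and> \<not> E u v) \<or>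
    (E p q \<and> E p x \<and> E p y \<and> E p u \<and> \<not> E p v \<and> E q x \<and> E q y \<and> \<not> E q u \<and> E q v \<and> \<not> E x y \<and> E x u \<and> E x v \<and> E y u \<and> E y v \<and> \<not> E u v)"
  and c0: "\<forall>w\<in>{p,q,x,y,u,v,z}. strict_corner {p,q,x,y,u,v,z} E w \<longleftrightarrow> w = z"
  shows "(E p q \<and> E p x \<and> E p y \<and> \<not> E p u \<and> E p v \<and> \<not> E p z \<and> E q x \<and> E q y \<and> E q u \<and> \<not> E q v \<and> \<not> E q z \<and> \<not> E x y \<and> E x u \<and> E x v \<and> E x z \<and> E y u \<and> E y v \<and> \<not> E y z \<and> \<not> E u v \<and> E u z \<and> E v z) \<or>
    (E p q \<and> E p x \<and> E p y \<and> \<not> E p u \<and> E p v \<and> \<not> E p z \<and> E q x \<and> E q y \<and> E q u \<and> \<not> E q v \<and> \<not> E q z \<and> \<not> E x y \<and> E x u \<and> E x v \<and> \<not> E x z \<and> E y u \<and> E y v \<and> E y z \<and> \<not> E u v \<and> E u z \<and> E v z) \<or>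
    (E p q \<and> E p x \<and> E p y \<and> E p u \<and> \<not> E p v \<and> \<not> E p z \<and> E q x \<and> E q y \<and> \<not> E q u \<and> E q v \<and> \<not> E q z \<and> \<not> E x y \<and> E x u \<and> E x v \<and> E x z \<and> E y u \<and> E y v \<and> \<not> E y z \<and> \<not> E u v \<and> E u z \<and> E v z) \<or>
    (E p q \<and> E p x \<and> E p y \<and> E p u \<and> \<not> E p v \<and> \<not> E p z \<and> E q x \<and> E q y \<and> \<not> E q u \<and> E q v \<and> \<not> E q z \<and> \<not> E x y \<and> E x u \<and> E x v \<and> \<not> E x z \<and> E y u \<and> E y v \<and> E y z \<and> \<not> E u v \<and> E u z \<and> E v z)"
  using c0 w1 dist unfolding sc_iff by (simp add: r s) (cases "E p x"; (simp add: r s)?; cases "E q x"; (simp add: r s)?; cases "E p y"; (simp add: r s)?; cases "E q y"; (simp add: r s)?; cases "E p u"; (simp add: r s)?; cases "E p v"; (simp add: r s)?; cases "E q u"; (simp add: r s)?; cases "E q v"; (simp add: r s)?; cases "E x u"; (simp add: r s)?; cases "E x v"; (simp add: r s)?; cases "E y u"; (simp add: r s)?; cases "E y v"; (simp add: r s)?; cases "E p z"; (simp add: r s)?; cases "E q z"; (simp add: r s)?; cases "E x z"; (simp add: r s)?; cases "E y z"; (simp add: r s)?; cases "E u z"; (simp add: r s)?; cases "E v z"; (simp add: r s)?)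

lemma h7_univ: "(UNIV :: h7v set) = {a1,a2,b1,b2,c1,c2,d}"
  using h7v.exhaust by auto

lemma h7_V: "H7V = {a1,a2,b1,b2,c1,c2,d}" by (simp add: H7V_def h7_univ)

lemma h7_rg: "rgraph H7V H7E"
proof -
  have "finite H7V" by (simp add: h7_V)
  thus ?thesis unfolding rgraph_def H7E_def by (auto simp: H7V_def)
qed

lemma corners_iff: "corners W E = {w\<in>W. strict_corner W E w}" by (simp add: corners_def)

lemma h7_c0: "corners {a1,a2,b1,b2,c1,c2,d} H7E = {d}"
  unfolding corners_def sc_iff by (auto simp: H7E_def H7_edges_def)

lemma h7_c1: "corners {a1,a2,b1,b2,c1,c2} H7E = {c1,c2}"
  unfolding corners_def sc_iff by (auto simp: H7E_def H7_edges_def)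

lemma h7_c2: "corners {a1,a2,b1,b2} H7E = {b1,b2}"
  unfolding corners_def sc_iff by (auto simp: H7E_def H7_edges_def)

lemma h7_st0: "stage H7V H7E 0 = {a1,a2,b1,b2,c1,c2,d}" by (simp add: h7_V)
lemma h7_st1: "stage H7V H7E 1 = {a1,a2,b1,b2,c1,c2}"
  unfolding stage.simps(2)[of _ _ 0, unfolded One_nat_def[symmetric]] h7_st0 h7_c0 by auto
lemma h7_st2: "stage H7V H7E 2 = {a1,a2,b1,b2}"
  unfolding stage.simps(2)[of _ _ 1, unfolded Suc_1] h7_st1 h7_c1 by auto
lemma h7_st3: "stage H7V H7E 3 = {a1,a2}"
proof -
  have e: "(3::nat) = Suc 2" by simp
  show ?thesis unfolding e stage.simps(2) h7_st2 h7_c2 by auto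
qed
lemma h7_c3: "corners {a1,a2} H7E = {}"
  unfolding corners_def sc_iff by (auto simp: H7E_def H7_edges_def)

lemma h7_tail: "stage H7V H7E (3 + j) = {a1,a2}"
proof (induction j)
  case 0 then show ?case using h7_st3 by simp
next
  case (Suc j) then show ?case by (simp only: add_Suc_right stage.simps(2) h7_c3) simp
qed

lemma h7_cl: "is_clique (stage H7V H7E k) H7E \<longleftrightarrow> 3 \<le> k"
proof -
  have nc: "\<not> is_clique {a1,a2,b1,b2} H7E" "\<not> is_clique {a1,a2,b1,b2,c1,c2} H7E"
     "\<not> is_clique {a1,a2,b1,b2,c1,c2,d} H7E"
    by (auto simp: is_clique_def H7E_def H7_edges_def)
  have cl: "is_clique {a1,a2} H7E" by (auto simp: is_clique_def H7E_def H7_edges_def)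
  have "k = 0 \<or> k = 1 \<or> k = 2 \<or> k = 3 + (k - 3)" by arith
  then show ?thesis
  proof (elim disjE)
    assume "k = 3 + (k - 3)"
    then have "stage H7V H7E k = {a1,a2}" using h7_tail by metis
    then show ?thesis using cl \<open>k = 3 + (k - 3)\<close> by simp
  qed (use nc h7_st0 h7_st1 h7_st2 in auto)
qed

lemma h7_rank: "corner_rank H7V H7E = 4"
proof -
  have "(LEAST k. is_clique (stage H7V H7E k) H7E) = 3"
    by (rule Least_equality) (simp_all add: h7_cl)
  thus ?thesis by (simp add: corner_rank_def)
qed

lemma h7_part: "rgraph H7V H7E \<and> finite_corner_rank H7V H7E \<and> rank_card_vector H7V H7E = [2,2,2,1]"
proof -
  have "finite_corner_rank H7V H7E" unfolding finite_corner_rank_def using h7_cl by blast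
  moreover have "rank_card_vector H7V H7E = [2,2,2,1]"
  proof -
    have "rank_set H7V H7E 1 = {d}" "rank_set H7V H7E 2 = {c1,c2}"
         "rank_set H7V H7E 3 = {b1,b2}" "rank_set H7V H7E 4 = {a1,a2}"
      by (simp_all add: rank_set_def h7_rank h7_st0 h7_st1 h7_st1[unfolded One_nat_def] h7_st2 h7_st3 h7_c0 h7_c1 h7_c2
            del: stage.simps)
    moreover have "[1..<Suc 4] = [1,2,3,4::nat]" by (simp add: numeral_eq_Suc upt_rec)
    ultimately show ?thesis unfolding rank_card_vector_def h7_rank by simp
  qed
  ultimately show ?thesis using h7_rg by blast
qed

lemma iso:
  assumes dist: "distinct [P,Q,X,Y,U,W,Z]" and VV: "V = {P,Q,X,Y,U,W,Z}"
  and sym: "\<forall>a b. E a b \<longrightarrow> E b a"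
  and r: "E P P" "E Q Q" "E X X" "E Y Y" "E U U" "E W W" "E Z Z"
  and l: "E P Q" "E P X" "E P Y" "\<not> E P U" "E P W" "\<not> E P Z" "E Q X" "E Q Y" "E Q U" "\<not> E Q W" "\<not> E Q Z" "\<not> E X Y" "E X U" "E X W" "E X Z" "E Y U" "E Y W" "\<not> E Y Z" "\<not> E U W" "E U Z" "E W Z"
  shows "graph_iso V E H7V H7E"
proof -
  define f where "f w = (if w = P then a1 else if w = Q then a2 else if w = X then b1 else if w = Y then b2
     else if w = U then c1 else if w = W then c2 else d)" for w
  have l2: "E Q P" "E X P" "E Y P" "\<not> E U P" "E W P" "\<not> E Z P" "E X Q" "E Y Q" "E U Q" "\<not> E W Q" "\<not> E Z Q" "\<not> E Y X" "E U X" "E W X" "E Z X" "E U Y" "E W Y" "\<not> E Z Y" "\<not> E W U" "E Z U" "E Z W"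
    using l sym by blast+
  have ne: "P \<noteq> Q" "P \<noteq> X" "P \<noteq> Y" "P \<noteq> U" "P \<noteq> W" "P \<noteq> Z" "Q \<noteq> P" "Q \<noteq> X" "Q \<noteq> Y" "Q \<noteq> U" "Q \<noteq> W" "Q \<noteq> Z" "X \<noteq> P" "X \<noteq> Q" "X \<noteq> Y" "X \<noteq> U" "X \<noteq> W" "X \<noteq> Z" "Y \<noteq> P" "Y \<noteq> Q" "Y \<noteq> X" "Y \<noteq> U" "Y \<noteq> W" "Y \<noteq> Z" "U \<noteq> P" "U \<noteq> Q" "U \<noteq> X" "U \<noteq> Y" "U \<noteq> W" "U \<noteq> Z" "W \<noteq> P" "W \<noteq> Q" "W \<noteq> X" "W \<noteq> Y" "W \<noteq> U" "W \<noteq> Z" "Z \<noteq> P" "Z \<noteq> Q" "Z \<noteq> X" "Z \<noteq> Y" "Z \<noteq> U" "Z \<noteq> W" using dist by auto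
  have "bij_betw f V H7V"
    unfolding bij_betw_def inj_on_def VV h7_V using ne by (auto simp: f_def)
  moreover have "\<forall>x\<in>V. \<forall>y\<in>V. E x y \<longleftrightarrow> H7E (f x) (f y)"
    unfolding VV using ne r l l2 by (simp add: f_def H7E_def H7_edges_def)
  ultimately show ?thesis unfolding graph_iso_def by blast
qed


lemma cor_form: "corners W E = C \<Longrightarrow> \<forall>w\<in>W. strict_corner W E w \<longleftrightarrow> w \<in> C"
  unfolding corners_def by blast

lemma corners_sub: "corners W E \<subseteq> W" unfolding corners_def by blast

lemma gen:
  fixes V :: "'a set"
  assumes rg: "rgraph V E" and fr: "finite_corner_rank V E" and rv: "rank_card_vector V E = [2,2,2,1]"
  shows "graph_iso V E H7V H7E"
proof -
  let ?L = "LEAST k. is_clique (stage V E k) E"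
  have "length (rank_card_vector V E) = corner_rank V E" unfolding rank_card_vector_def by simp
  then have cr: "corner_rank V E = 4" using rv by simp
  then have L: "?L = 3" unfolding corner_rank_def by simp
  have cl3: "is_clique (stage V E 3) E"
    using LeastI_ex[of "\<lambda>k. is_clique (stage V E k) E"] fr L unfolding finite_corner_rank_def by simp
  have up: "[1..<Suc 4] = [1,2,3,4::nat]" by (simp add: numeral_eq_Suc upt_rec)
  have rs: "rank_set V E 1 = corners (stage V E 0) E" "rank_set V E 2 = corners (stage V E 1) E"
         "rank_set V E 3 = corners (stage V E 2) E" "rank_set V E 4 = stage V E 3"
    by (simp_all add: rank_set_def cr del: stage.simps)
  have cards: "card (stage V E 3) = 2" "card (corners (stage V E 2) E) = 2"
     "card (corners (stage V E 1) E) = 2" "card (corners (stage V E 0) E) = 1"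
    using rv unfolding rank_card_vector_def cr up rs[symmetric] by simp_all
  obtain p q where S3: "stage V E 3 = {p,q}" and pq0: "p \<noteq> q" using card_2_iff[THEN iffD1, OF cards(1)] by blast
  obtain x y where C2: "corners (stage V E 2) E = {x,y}" and xy0: "x \<noteq> y" using card_2_iff[THEN iffD1, OF cards(2)] by blast
  obtain u v where C1: "corners (stage V E 1) E = {u,v}" and uv0: "u \<noteq> v" using card_2_iff[THEN iffD1, OF cards(3)] by blast
  obtain z where C0: "corners (stage V E 0) E = {z}" using card_1_singleton_iff[THEN iffD1, OF cards(4)[unfolded One_nat_def]] by blast
  have e3: "(3::nat) = Suc 2" and e2: "(2::nat) = Suc 1" and e1: "(1::nat) = Suc 0" by simp_all
  have sg3: "stage V E 3 = stage V E 2 - corners (stage V E 2) E" by (subst e3) (simp only: stage.simps)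
  have sg2: "stage V E 2 = stage V E 1 - corners (stage V E 1) E" by (subst e2) (simp only: stage.simps)
  have sg1: "stage V E 1 = stage V E 0 - corners (stage V E 0) E" by (subst e1) (simp only: stage.simps)
  have S2: "stage V E 2 = {p,q,x,y}" and xyn: "x \<notin> {p,q}" "y \<notin> {p,q}"
  proof -
    have "stage V E 2 = stage V E 3 \<union> corners (stage V E 2) E"
      using sg3 corners_sub[of "stage V E 2" E] by blast
    then show "stage V E 2 = {p,q,x,y}" using S3 C2 by auto
    show "x \<notin> {p,q}" "y \<notin> {p,q}" using sg3 S3 C2 by blast+
  qed
  have S1: "stage V E 1 = {p,q,x,y,u,v}" and uvn: "u \<notin> {p,q,x,y}" "v \<notin> {p,q,x,y}"
  proof -
    have "stage V E 1 = stage V E 2 \<union> corners (stage V E 1) E"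
      using sg2 corners_sub[of "stage V E 1" E] by blast
    then show "stage V E 1 = {p,q,x,y,u,v}" using S2 C1 by auto
    show "u \<notin> {p,q,x,y}" "v \<notin> {p,q,x,y}" using sg2 S2 C1 by blast+
  qed
  have S0: "V = {p,q,x,y,u,v,z}" and zn: "z \<notin> {p,q,x,y,u,v}"
  proof -
    have "stage V E 0 = stage V E 1 \<union> corners (stage V E 0) E"
      using sg1 corners_sub[of "stage V E 0" E] by blast
    then show "V = {p,q,x,y,u,v,z}" using S1 C0 by auto
    show "z \<notin> {p,q,x,y,u,v}" using sg1 S1 C0 by blast
  qed
  have dist: "distinct [p,q,x,y,u,v,z]" using pq0 xy0 uv0 xyn uvn zn by auto
  have c2: "\<forall>w\<in>{p,q,x,y}. strict_corner {p,q,x,y} E w \<longleftrightarrow> w\<in>{x,y}"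
    using cor_form[OF C2] S2 by simp
  have c1: "\<forall>w\<in>{p,q,x,y,u,v}. strict_corner {p,q,x,y,u,v} E w \<longleftrightarrow> w\<in>{u,v}"
    using cor_form[OF C1] S1 by simp
  have c0: "\<forall>w\<in>{p,q,x,y,u,v,z}. strict_corner {p,q,x,y,u,v,z} E w \<longleftrightarrow> w = z"
    using cor_form[OF C0] S0 by simp
  have pq: "E p q" using cl3 S3 unfolding is_clique_def by simp
  have sym: "\<forall>a b. E a b \<longrightarrow> E b a" using rg unfolding rgraph_def by blast
  have rf: "\<forall>w\<in>V. E w w" using rg unfolding rgraph_def by blast
  have r: "E p p" "E q q" "E x x" "E y y" "E u u" "E v v" "E z z" using rf unfolding S0 by simp_all
  have s: "E q p = E p q" "E x p = E p x" "E y p = E p y" "E u p = E p u" "E v p = E p v" "E z p = E p z" "E x q = E q x" "E y q = E q y" "E u q = E q u" "E v q = E q v" "E z q = E q z" "E y x = E x y" "E u x = E x u" "E v x = E x v" "E z x = E x z" "E u y = E y u" "E v y = E y v" "E z y = E y z" "E v u = E u v" "E z u = E u z" "E z v = E v z" using sym by blast+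
  have w2: "\<not> E x y \<and> ((E p x \<and> E q y) \<or> (E q x \<and> E p y))"
    by (rule st2) (use dist r s pq c2 in simp_all)
  have w1: "(E p q \<and> \<not> E p x \<and> E p y \<and> \<not> E p u \<and> \<not> E p v \<and> E q x \<and> \<not> E q y \<and> \<not> E q u \<and> \<not> E q v \<and> \<not> E x y \<and> \<not> E x u \<and> E x v \<and> E y u \<and> \<not> E y v \<and> \<not> E u v) \<or>
    (E p q \<and> \<not> E p x \<and> E p y \<and> \<not> E p u \<and> \<not> E p v \<and> E q x \<and> \<not> E q y \<and> \<not> E q u \<and> \<not> E q v \<and> \<not> E x y \<and> E x u \<and> \<not> E x v \<and> \<not> E y u \<and> E y v \<and> \<not> E u v) \<or>
    (E p q \<and> E p x \<and> \<not> E p y \<and> \<not> E p u \<and> \<not> E p v \<and> \<not> E q x \<and> E q y \<and> \<not> E q u \<and> \<not> E q v \<and> \<not> E x y \<and> \<not> E x u \<and> E x v \<and> E y u \<and> \<not> E y v \<and> \<not> E u v) \<or>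
    (E p q \<and> E p x \<and> \<not> E p y \<and> \<not> E p u \<and> \<not> E p v \<and> \<not> E q x \<and> E q y \<and> \<not> E q u \<and> \<not> E q v \<and> \<not> E x y \<and> E x u \<and> \<not> E x v \<and> \<not> E y u \<and> E y v \<and> \<not> E u v) \<or>
    (E p q \<and> E p x \<and> E p y \<and> \<not> E p u \<and> \<not> E p v \<and> E q x \<and> E q y \<and> \<not> E q u \<and> \<not> E q v \<and> \<not> E x y \<and> \<not> E x u \<and> E x v \<and> E y u \<and> \<not> E y v \<and> \<not> E u v) \<or>
    (E p q \<and> E p x \<and> E p y \<and> \<not> E p u \<and> \<not> E p v \<and> E q x \<and> E q y \<and> \<not> E q u \<and> \<not> E q v \<and> \<not> E x y \<and> E x u \<and> \<not> E x v \<and> \<not> E y u \<and> E y v \<and> \<not> E u v) \<or>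
    (E p q \<and> E p x \<and> E p y \<and> \<not> E p u \<and> E p v \<and> E q x \<and> E q y \<and> E q u \<and> \<not> E q v \<and> \<not> E x y \<and> E x u \<and> E x v \<and> E y u \<and> E y v \<and> \<not> E u v) \<or>
    (E p q \<and> E p x \<and> E p y \<and> E p u \<and> \<not> E p v \<and> E q x \<and> E q y \<and> \<not> E q u \<and> E q v \<and> \<not> E x y \<and> E x u \<and> E x v \<and> E y u \<and> E y v \<and> \<not> E u v)"
    by (rule st1) (use dist r s pq w2 c2 c1 in simp_all)
  have "(E p q \<and> E p x \<and> E p y \<and> \<not> E p u \<and> E p v \<and> \<not> E p z \<and> E q x \<and> E q y \<and> E q u \<and> \<not> E q v \<and> \<not> E q z \<and> \<not> E x y \<and> E x u \<and> E x v \<and> E x z \<and> E y u \<and> E y v \<and> \<not> E y z \<and> \<not> E u v \<and> E u z \<and> E v z) \<or>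
    (E p q \<and> E p x \<and> E p y \<and> \<not> E p u \<and> E p v \<and> \<not> E p z \<and> E q x \<and> E q y \<and> E q u \<and> \<not> E q v \<and> \<not> E q z \<and> \<not> E x y \<and> E x u \<and> E x v \<and> \<not> E x z \<and> E y u \<and> E y v \<and> E y z \<and> \<not> E u v \<and> E u z \<and> E v z) \<or>
    (E p q \<and> E p x \<and> E p y \<and> E p u \<and> \<not> E p v \<and> \<not> E p z \<and> E q x \<and> E q y \<and> \<not> E q u \<and> E q v \<and> \<not> E q z \<and> \<not> E x y \<and> E x u \<and> E x v \<and> E x z \<and> E y u \<and> E y v \<and> \<not> E y z \<and> \<not> E u v \<and> E u z \<and> E v z) \<or>
    (E p q \<and> E p x \<and> E p y \<and> E p u \<and> \<not> E p v \<and> \<not> E p z \<and> E q x \<and> E q y \<and> \<not> E q u \<and> E q v \<and> \<not> E q z \<and> \<not> E x y \<and> E x u \<and> E x v \<and> \<not> E x z \<and> E y u \<and> E y v \<and> E y z \<and> \<not> E u v \<and> E u z \<and> E v z)"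
    by (rule st0) (use dist r s w1 c0 in simp_all)
  then show ?thesis
  proof (elim disjE)
    assume g: "(E p q \<and> E p x \<and> E p y \<and> \<not> E p u \<and> E p v \<and> \<not> E p z \<and> E q x \<and> E q y \<and> E q u \<and> \<not> E q v \<and> \<not> E q z \<and> \<not> E x y \<and> E x u \<and> E x v \<and> E x z \<and> E y u \<and> E y v \<and> \<not> E y z \<and> \<not> E u v \<and> E u z \<and> E v z)"
    show ?thesis by (rule iso[of p q x y u v z, OF _ _ sym]) (use dist S0 r g s in \<open>auto simp: insert_commute\<close>)
  next
    assume g: "(E p q \<and> E p x \<and> E p y \<and> \<not> E p u \<and> E p v \<and> \<not> E p z \<and> E q x \<and> E q y \<and> E q u \<and> \<not> E q v \<and> \<not> E q z \<and> \<not> E x y \<and> E x u \<and> E x v \<and> \<not> E x z \<and> E y u \<and> E y v \<and> E y z \<and> \<not> E u v \<and> E u z \<and> E v z)"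
    show ?thesis by (rule iso[of p q y x u v z, OF _ _ sym]) (use dist S0 r g s in \<open>auto simp: insert_commute\<close>)
  next
    assume g: "(E p q \<and> E p x \<and> E p y \<and> E p u \<and> \<not> E p v \<and> \<not> E p z \<and> E q x \<and> E q y \<and> \<not> E q u \<and> E q v \<and> \<not> E q z \<and> \<not> E x y \<and> E x u \<and> E x v \<and> E x z \<and> E y u \<and> E y v \<and> \<not> E y z \<and> \<not> E u v \<and> E u z \<and> E v z)"
    show ?thesis by (rule iso[of p q x y v u z, OF _ _ sym]) (use dist S0 r g s in \<open>auto simp: insert_commute\<close>)
  next
    assume g: "(E p q \<and> E p x \<and> E p y \<and> E p u \<and> \<not> E p v \<and> \<not> E p z \<and> E q x \<and> E q y \<and> \<not> E q u \<and> E q v \<and> \<not> E q z \<and> \<not> E x y \<and> E x u \<and> E x v \<and> \<not> E x z \<and> E y u \<and> E y v \<and> E y z \<and> \<not> E u v \<and> E u z \<and> E v z)"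
    show ?thesis by (rule iso[of p q y x v u z, OF _ _ sym]) (use dist S0 r g s in \<open>auto simp: insert_commute\<close>)
  qed
qed

theorem lemma3p28:
  shows "(rgraph H7V H7E \<and> finite_corner_rank H7V H7E \<and> rank_card_vector H7V H7E = [2,2,2,1])
    \<and> (\<forall>(V :: 'a set) E. rgraph V E \<and> finite_corner_rank V E \<and>
           rank_card_vector V E = [2,2,2,1] \<longrightarrow> graph_iso V E H7V H7E)"
  using h7_part gen by blast

end
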